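(* Let $\mathcal{R}$ be the hyperfinite $II_1$ factor with normalized trace $\tau$, realized as the weak closure of the increasing union $\bigcup_{j\ge0} M_{2^j}(\mathbb{C})$; let $P_n$ be the orthogonal projection of $L^2(\mathcal{R},\tau)$ onto $M_{2^n}(\mathbb{C})$ and $Q_n=I-P_n$. Let $(\mathcal{E},D(\mathcal{E}))$ be a Dirichlet form on $L^2(\mathcal{R},\tau)$ with $D(\mathcal{E})\supseteq \bigcup_{j\ge0}M_{2^j}(\mathbb{C})$, and set $\mathcal{E}_n(a)=\mathcal{E}(P_na)$. Then the following are equivalent: (1) $\lim_{n\to\infty}\mathcal{E}_n(a)=\mathcal{E}(a)$ for all $a\in D(\mathcal{E})$; (2) $\lim_{n\to\infty}\mathcal{E}(Q_na)=0$ for all $a\in D(\mathcal{E})$.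
   Context: $M_{2^n}(\mathbb{C})$ is embedded in $M_{2^{n+1}}(\mathbb{C})$ via $a\mapsto \mathrm{diag}(a,a)$. $L^2(\mathcal{R},\tau)$ is the completion of $\mathcal{R}$ in $\|a\|_2=\tau(a^*a)^{1/2}$; $J$ is the antilinear isometry extending $a\mapsto a^*$; $L^2_+$ is the closure of the positive elements of $\mathcal{R}$; for real ($J$-invariant) $a$, $a\wedge1$ is the Hilbert projection of $a$ onto the $L^2$-closure of $\{b\in L^2_+: b\le 1\}$. A Dirichlet form is a closed, densely defined, nonnegative quadratic form on $L^2(\mathcal{R},\tau)$ that is real ($D(\mathcal{E})$ is $J$-invariant and $\mathcal{E}(Ja)=\mathcal{E}(a)$) and satisfies $\mathcal{E}(a\wedge1)\le\mathcal{E}(a)$ for real $a\in D(\mathcal{E})$. *)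

theory Defs
  imports Complex_Main
begin

text \<open>A matrix of level k is a function nat => nat => complex vanishing outside [0,2^k)^2.
  An element of L^2(R,tau) is represented by the compatible family x = (x k)_k of its
  conditional expectations onto M_{2^k}(C) (an L^2-bounded martingale); this family
  determines the element, and every such bounded compatible family arises.\<close>

type_synonym cmat = "nat \<Rightarrow> nat \<Rightarrow> complex"
type_synonym l2 = "nat \<Rightarrow> cmat"

definition is_mat :: "nat \<Rightarrow> cmat \<Rightarrow> bool" where
  "is_mat k A \<longleftrightarrow> (\<forall>i j. (2^k \<le> i \<or> 2^k \<le> j) \<longrightarrow> A i j = 0)"

definition diag2 :: "nat \<Rightarrow> cmat \<Rightarrow> cmat" where
  "diag2 k A = (\<lambda>i j.
     if i < 2^k \<and> j < 2^k then A i j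
     else if 2^k \<le> i \<and> i < 2^(Suc k) \<and> 2^k \<le> j \<and> j < 2^(Suc k)
       then A (i - 2^k) (j - 2^k) else 0)"

primrec embed_up :: "nat \<Rightarrow> nat \<Rightarrow> cmat \<Rightarrow> cmat" where
  "embed_up n 0 A = A"
| "embed_up n (Suc m) A = diag2 (n + m) (embed_up n m A)"

text \<open>The trace-preserving conditional expectation M_{2^(k+1)} -> M_{2^k}
  (the inverse image of the tau-orthogonal projection onto diag(M_{2^k}, M_{2^k})).\<close>
definition cexp :: "nat \<Rightarrow> cmat \<Rightarrow> cmat" where
  "cexp k B = (\<lambda>i j. if i < 2^k \<and> j < 2^k then (B i j + B (i + 2^k) (j + 2^k)) / 2 else 0)"

definition hs_sq :: "nat \<Rightarrow> cmat \<Rightarrow> real" where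
  "hs_sq k A = (\<Sum>i<2^k. \<Sum>j<2^k. (cmod (A i j))\<^sup>2) / 2^k"

definition L2 :: "l2 set" where
  "L2 = {x. (\<forall>k. is_mat k (x k)) \<and> (\<forall>k. cexp k (x (Suc k)) = x k)
            \<and> bdd_above (range (\<lambda>k. hs_sq k (x k)))}"

definition l2add :: "l2 \<Rightarrow> l2 \<Rightarrow> l2" where
  "l2add x y = (\<lambda>k i j. x k i j + y k i j)"

definition l2minus :: "l2 \<Rightarrow> l2 \<Rightarrow> l2" where
  "l2minus x y = (\<lambda>k i j. x k i j - y k i j)"

definition l2scale :: "complex \<Rightarrow> l2 \<Rightarrow> l2" where
  "l2scale c x = (\<lambda>k i j. c * x k i j)"

definition l2J :: "l2 \<Rightarrow> l2" where
  "l2J x = (\<lambda>k i j. cnj (x k j i))"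

definition l2nsq :: "l2 \<Rightarrow> real" where
  "l2nsq x = (SUP k. hs_sq k (x k))"

definition l2dist :: "l2 \<Rightarrow> l2 \<Rightarrow> real" where
  "l2dist x y = sqrt (l2nsq (l2minus x y))"

definition l2closure :: "l2 set \<Rightarrow> l2 set" where
  "l2closure S = {x \<in> L2. \<forall>e>0. \<exists>s\<in>S. l2dist x s < e}"

definition hproj :: "l2 set \<Rightarrow> l2 \<Rightarrow> l2" where
  "hproj S x = (THE y. y \<in> S \<and> (\<forall>z\<in>S. l2dist x y \<le> l2dist x z))"

definition Mn :: "nat \<Rightarrow> l2 set" where
  "Mn n = {x \<in> L2. \<forall>m. x (n + m) = embed_up n m (x n)}"

definition Pn :: "nat \<Rightarrow> l2 \<Rightarrow> l2" where
  "Pn n a = hproj (Mn n) a"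

definition Qn :: "nat \<Rightarrow> l2 \<Rightarrow> l2" where
  "Qn n a = l2minus a (Pn n a)"

text \<open>R inside L^2: elements whose martingale is uniformly bounded in operator norm.\<close>
definition op_bounded :: "nat \<Rightarrow> cmat \<Rightarrow> real \<Rightarrow> bool" where
  "op_bounded k A C \<longleftrightarrow> (\<forall>v::nat \<Rightarrow> complex.
     (\<Sum>i<2^k. (cmod (\<Sum>j<2^k. A i j * v j))\<^sup>2) \<le> C\<^sup>2 * (\<Sum>j<2^k. (cmod (v j))\<^sup>2))"

definition psd :: "nat \<Rightarrow> cmat \<Rightarrow> bool" where
  "psd k A \<longleftrightarrow> (\<forall>v::nat \<Rightarrow> complex.
     (\<Sum>i<2^k. \<Sum>j<2^k. cnj (v i) * A i j * v j) \<in> \<real> \<and>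
     0 \<le> Re (\<Sum>i<2^k. \<Sum>j<2^k. cnj (v i) * A i j * v j))"

definition Rvec :: "l2 set" where
  "Rvec = {x \<in> L2. \<exists>C. \<forall>k. op_bounded k (x k) C}"

definition Rpos :: "l2 set" where
  "Rpos = {x \<in> Rvec. \<forall>k. psd k (x k)}"

definition L2pos :: "l2 set" where
  "L2pos = l2closure Rpos"

definition one_l2 :: l2 where
  "one_l2 = (\<lambda>k i j. if i = j \<and> i < 2^k then 1 else 0)"

definition wedge1 :: "l2 \<Rightarrow> l2" where
  "wedge1 a = hproj (l2closure {b \<in> L2pos. l2minus one_l2 b \<in> L2pos}) a"

definition nonneg_quadratic_form :: "l2 set \<Rightarrow> (l2 \<Rightarrow> real) \<Rightarrow> bool" where
  "nonneg_quadratic_form D E \<longleftrightarrow>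
     D \<subseteq> L2 \<and> (\<lambda>k i j. 0) \<in> D \<and>
     (\<forall>a\<in>D. \<forall>b\<in>D. l2add a b \<in> D) \<and> (\<forall>c. \<forall>a\<in>D. l2scale c a \<in> D) \<and>
     (\<exists>q :: l2 \<Rightarrow> l2 \<Rightarrow> complex.
        (\<forall>a\<in>D. \<forall>b\<in>D. \<forall>c\<in>D. q (l2add a b) c = q a c + q b c) \<and>
        (\<forall>s. \<forall>a\<in>D. \<forall>b\<in>D. q (l2scale s a) b = s * q a b) \<and>
        (\<forall>a\<in>D. \<forall>b\<in>D. q b a = cnj (q a b)) \<and>
        (\<forall>a\<in>D. E a = Re (q a a))) \<and>
     (\<forall>a\<in>D. 0 \<le> E a)"

definition closed_form :: "l2 set \<Rightarrow> (l2 \<Rightarrow> real) \<Rightarrow> bool" where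
  "closed_form D E \<longleftrightarrow>
     (\<forall>u a. (\<forall>m. u m \<in> D) \<longrightarrow> a \<in> L2 \<longrightarrow> (\<lambda>m. l2dist (u m) a) \<longlonglongrightarrow> 0 \<longrightarrow>
        (\<forall>e>0. \<exists>N. \<forall>m\<ge>N. \<forall>l\<ge>N. E (l2minus (u m) (u l)) < e) \<longrightarrow>
        a \<in> D \<and> (\<lambda>m. E (l2minus (u m) a)) \<longlonglongrightarrow> 0)"

definition densely_defined :: "l2 set \<Rightarrow> bool" where
  "densely_defined D \<longleftrightarrow> (\<forall>x\<in>L2. \<forall>e>0. \<exists>d\<in>D. l2dist x d < e)"

definition dirichlet_form :: "l2 set \<Rightarrow> (l2 \<Rightarrow> real) \<Rightarrow> bool" where
  "dirichlet_form D E \<longleftrightarrow>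
     nonneg_quadratic_form D E \<and> closed_form D E \<and> densely_defined D \<and>
     (\<forall>a\<in>D. l2J a \<in> D \<and> E (l2J a) = E a) \<and>
     (\<forall>a\<in>D. l2J a = a \<longrightarrow> wedge1 a \<in> D \<and> E (wedge1 a) \<le> E a)"

end

theory Submission
  imports Defs
begin

lemma sum_split2: "(\<Sum>i<2*(m::nat). f i) = (\<Sum>i<m. f i) + (\<Sum>i<m. f (i+m)::'a::comm_monoid_add)"
proof -
  have "{..<2*m} = {..<m} \<union> {m..<m+m}" by auto
  then have "(\<Sum>i<2*m. f i) = sum f ({..<m} \<union> {m..<m+m})" by simp
  also have "\<dots> = (\<Sum>i<m. f i) + (\<Sum>i\<in>{m..<m+m}. f i)"
    by (rule sum.union_disjoint) auto
  also have "(\<Sum>i\<in>{m..<m+m}. f i) = (\<Sum>i<m. f (i+m))"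
    using sum.shift_bounds_nat_ivl[of f 0 m m] by (simp add: lessThan_atLeast0)
  finally show ?thesis .
qed

definition ip :: "nat \<Rightarrow> cmat \<Rightarrow> cmat \<Rightarrow> complex" where
  "ip k A B = (\<Sum>i<2^k. \<Sum>j<2^k. cnj (A i j) * B i j) / 2^k"

lemma ip_diag2:
  assumes "is_mat k B"
  shows "ip (Suc k) A (diag2 k B) = ip k (cexp k A) B"
proof -
  define m :: nat where "m = 2^k"
  have m2: "(2::nat)^Suc k = 2*m" by (simp add: m_def)
  have "(\<Sum>i<2*m. \<Sum>j<2*m. cnj (A i j) * diag2 k B i j)
      = (\<Sum>i<m. \<Sum>j<m. (cnj (A i j) + cnj (A (i+m) (j+m))) * B i j)"
    unfolding sum_split2
    by (simp add: diag2_def m_def[symmetric] sum.distrib[symmetric] distrib_right)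
  moreover have "ip k (cexp k A) B = (\<Sum>i<m. \<Sum>j<m. (cnj (A i j) + cnj (A (i+m) (j+m))) * B i j) / (2*2^k)"
  proof -
    have "ip k (cexp k A) B = (\<Sum>i<m. \<Sum>j<m. ((cnj (A i j) + cnj (A (i+m) (j+m))) * B i j) / 2) / 2^k"
      unfolding ip_def cexp_def m_def[symmetric]
      by (intro arg_cong2[where f="(/)"] sum.cong refl) (auto simp: field_simps)
    also have "\<dots> = (\<Sum>i<m. \<Sum>j<m. (cnj (A i j) + cnj (A (i+m) (j+m))) * B i j) / (2*2^k)"
      by (simp add: sum_divide_distrib[symmetric])
    finally show ?thesis .
  qed
  ultimately show ?thesis unfolding ip_def m2 by (simp add: m_def)
qed

lemma cexp_diag2: "is_mat k B \<Longrightarrow> cexp k (diag2 k B) = B"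
  by (auto simp: cexp_def diag2_def is_mat_def fun_eq_iff)

lemma is_mat_diag2: "is_mat (Suc k) (diag2 k B)"
  by (auto simp: is_mat_def diag2_def)

lemma is_mat_cexp: "is_mat k (cexp k A)"
  by (auto simp: is_mat_def cexp_def)

lemma is_mat_embed: "is_mat n B \<Longrightarrow> is_mat (n+m) (embed_up n m B)"
  by (induction m) (auto simp: is_mat_diag2)

lemma cexp_diff: "cexp k (\<lambda>i j. A i j - B i j) = (\<lambda>i j. cexp k A i j - cexp k B i j)"
  by (auto simp: cexp_def fun_eq_iff field_simps)

lemma diag2_diff: "diag2 k (\<lambda>i j. A i j - B i j) = (\<lambda>i j. diag2 k A i j - diag2 k B i j)"
  by (auto simp: diag2_def fun_eq_iff)

lemma embed_diff: "embed_up n m (\<lambda>i j. A i j - B i j) = (\<lambda>i j. embed_up n m A i j - embed_up n m B i j)"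
  by (induction m) (auto simp: diag2_diff)

lemma ip_diff_left: "ip k (\<lambda>i j. A i j - B i j) C = ip k A C - ip k B C"
  by (simp add: ip_def diff_divide_distrib[symmetric] sum_subtractf[symmetric] algebra_simps)

lemma L2_mat: "x \<in> L2 \<Longrightarrow> is_mat k (x k)"
  by (simp add: L2_def)

lemma L2_cexp: "x \<in> L2 \<Longrightarrow> cexp k (x (Suc k)) = x k"
  by (simp add: L2_def)

lemma L2_bdd: "x \<in> L2 \<Longrightarrow> bdd_above (range (\<lambda>k. hs_sq k (x k)))"
  by (simp add: L2_def)

lemma ip_embed_mart:
  assumes "x \<in> L2" "is_mat n C"
  shows "ip (n+m) (x (n+m)) (embed_up n m C) = ip n (x n) C"
proof (induction m)
  case 0 then show ?case by simp
next
  case (Suc m)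
  have "ip (n + Suc m) (x (n + Suc m)) (embed_up n (Suc m) C)
      = ip (Suc (n+m)) (x (Suc (n + m))) (diag2 (n+m) (embed_up n m C))" by simp
  also have "\<dots> = ip (n+m) (x (n+m)) (embed_up n m C)"
    using ip_diag2[OF is_mat_embed[OF assms(2)]] L2_cexp[OF assms(1)] by simp
  finally show ?case using Suc by simp
qed

lemma ip_embed_embed:
  assumes "is_mat n A" "is_mat n C"
  shows "ip (n+m) (embed_up n m A) (embed_up n m C) = ip n A C"
proof (induction m)
  case 0 then show ?case by simp
next
  case (Suc m)
  have "ip (n + Suc m) (embed_up n (Suc m) A) (embed_up n (Suc m) C)
      = ip (Suc (n+m)) (diag2 (n+m) (embed_up n m A)) (diag2 (n+m) (embed_up n m C))" by simp
  also have "\<dots> = ip (n+m) (embed_up n m A) (embed_up n m C)"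
    using ip_diag2[OF is_mat_embed[OF assms(2)]] cexp_diag2[OF is_mat_embed[OF assms(1)]] by simp
  finally show ?case using Suc by simp
qed

lemma cmod_sq_cnj: "complex_of_real ((cmod z)\<^sup>2) = cnj z * z"
  by (metis complex_norm_square mult.commute)

lemma hs_ip: "hs_sq k A = Re (ip k A A)"
proof -
  have e: "\<And>z. cnj z * z = (complex_of_real (cmod z))\<^sup>2" using cmod_sq_cnj by simp
  have "ip k A A = complex_of_real (hs_sq k A)"
    by (simp add: ip_def hs_sq_def e)
  then show ?thesis by simp
qed

lemma cmod_add_sq: "(cmod (u + v))\<^sup>2 = (cmod u)\<^sup>2 + (cmod v)\<^sup>2 + 2 * Re (cnj u * v)"
  by (simp add: cmod_power2 power2_sum algebra_simps)

lemma hs_add: "hs_sq k (\<lambda>i j. U i j + V i j) = hs_sq k U + hs_sq k V + 2 * Re (ip k U V)"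
  by (simp add: hs_sq_def ip_def cmod_add_sq sum.distrib sum_distrib_left add_divide_distrib)

lemma pyth:
  assumes "ip k (\<lambda>i j. T i j - V i j) V = 0"
  shows "hs_sq k T = hs_sq k (\<lambda>i j. T i j - V i j) + hs_sq k V"
  using hs_add[of k "\<lambda>i j. T i j - V i j" V] assms by simp

lemma is_mat_diff: "is_mat k A \<Longrightarrow> is_mat k B \<Longrightarrow> is_mat k (\<lambda>i j. A i j - B i j)"
  by (simp add: is_mat_def)

lemma is_mat_add: "is_mat k A \<Longrightarrow> is_mat k B \<Longrightarrow> is_mat k (\<lambda>i j. A i j + B i j)"
  by (simp add: is_mat_def)

lemma is_mat_scale: "is_mat k A \<Longrightarrow> is_mat k (\<lambda>i j. c * A i j)"
  by (simp add: is_mat_def)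

lemma embed_zero: "embed_up n m (\<lambda>i j. 0) = (\<lambda>i j. 0)"
  by (induction m) (auto simp: diag2_def fun_eq_iff)

lemma hs_nonneg: "0 \<le> hs_sq k A"
  by (simp add: hs_sq_def sum_nonneg)

lemma mart_pyth:
  assumes x: "x \<in> L2" and C: "is_mat n C"
  shows "hs_sq (n+m) (\<lambda>i j. x (n+m) i j - embed_up n m C i j)
       = hs_sq (n+m) (\<lambda>i j. x (n+m) i j - embed_up n m (x n) i j) + hs_sq n (\<lambda>i j. x n i j - C i j)"
proof -
  define D where "D = (\<lambda>i j. x n i j - C i j)"
  have D: "is_mat n D" unfolding D_def by (rule is_mat_diff[OF L2_mat[OF x] C])
  define V where "V = embed_up n m D"
  have V: "V = (\<lambda>i j. embed_up n m (x n) i j - embed_up n m C i j)"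
    unfolding V_def D_def by (rule embed_diff)
  have TV: "(\<lambda>i j. (x (n+m) i j - embed_up n m C i j) - V i j) = (\<lambda>i j. x (n+m) i j - embed_up n m (x n) i j)"
    unfolding V by auto
  have "ip (n+m) (\<lambda>i j. x (n+m) i j - embed_up n m (x n) i j) V = 0"
    unfolding ip_diff_left V_def
    using ip_embed_mart[OF x D, of m] ip_embed_embed[OF L2_mat[OF x] D, of m] by simp
  then have "hs_sq (n+m) (\<lambda>i j. x (n+m) i j - embed_up n m C i j)
     = hs_sq (n+m) (\<lambda>i j. x (n+m) i j - embed_up n m (x n) i j) + hs_sq (n+m) V"
    using pyth[of "n+m" "\<lambda>i j. x (n+m) i j - embed_up n m C i j" V] TV by simp
  moreover have "hs_sq (n+m) V = hs_sq n D"
    unfolding hs_ip V_def using ip_embed_embed[OF D D, of m] by simp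
  ultimately show ?thesis unfolding D_def by simp
qed

lemma mart_pyth0:
  assumes x: "x \<in> L2"
  shows "hs_sq (n+m) (x (n+m))
       = hs_sq (n+m) (\<lambda>i j. x (n+m) i j - embed_up n m (x n) i j) + hs_sq n (x n)"
proof -
  have "is_mat n (\<lambda>i j. 0)" by (simp add: is_mat_def)
  from mart_pyth[OF x this, of m] show ?thesis by (simp add: embed_zero)
qed

lemma hs_mono: "x \<in> L2 \<Longrightarrow> hs_sq n (x n) \<le> hs_sq (n+m) (x (n+m))"
  using mart_pyth0[of x n m] hs_nonneg[of "n+m"] by simp

lemma hs_incseq: "x \<in> L2 \<Longrightarrow> incseq (\<lambda>k. hs_sq k (x k))"
  by (rule incseq_SucI) (use hs_mono[of x _ 1] in simp)

lemma l2nsq_lim: "x \<in> L2 \<Longrightarrow> (\<lambda>k. hs_sq k (x k)) \<longlonglongrightarrow> l2nsq x"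
  unfolding l2nsq_def by (rule LIMSEQ_incseq_SUP[OF L2_bdd hs_incseq])

lemma l2nsq_tail: "x \<in> L2 \<Longrightarrow> (\<lambda>m. hs_sq (n+m) (x (n+m))) \<longlonglongrightarrow> l2nsq x"
  using LIMSEQ_ignore_initial_segment[OF l2nsq_lim, of x n] by (simp add: add.commute)

lemma l2nsq_ge: "x \<in> L2 \<Longrightarrow> hs_sq k (x k) \<le> l2nsq x"
  unfolding l2nsq_def by (rule cSUP_upper[OF _ L2_bdd]) auto

lemma l2nsq_nonneg: "x \<in> L2 \<Longrightarrow> 0 \<le> l2nsq x"
  by (rule order_trans[OF hs_nonneg l2nsq_ge])

lemma l2nsq_le: "(\<And>k. hs_sq k (x k) \<le> B) \<Longrightarrow> l2nsq x \<le> B"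
  unfolding l2nsq_def by (rule cSUP_least) auto

lemma cmod_diff_sq_le: "(cmod (u - v))\<^sup>2 \<le> 2 * (cmod u)\<^sup>2 + 2 * (cmod v)\<^sup>2"
proof -
  have "cmod (u - v) \<le> cmod u + cmod v" by (rule norm_triangle_ineq4)
  then have "(cmod (u - v))\<^sup>2 \<le> (cmod u + cmod v)\<^sup>2" by (simp add: power_mono)
  also have "\<dots> \<le> 2 * (cmod u)\<^sup>2 + 2 * (cmod v)\<^sup>2"
    by (simp add: power2_sum) (smt (verit) sum_squares_bound)
  finally show ?thesis .
qed

lemma cmod_add_sq_le: "(cmod (u + v))\<^sup>2 \<le> 2 * (cmod u)\<^sup>2 + 2 * (cmod v)\<^sup>2"
  using cmod_diff_sq_le[of u "-v"] by simp

lemma hs_diff_le: "hs_sq k (\<lambda>i j. U i j - V i j) \<le> 2 * hs_sq k U + 2 * hs_sq k V"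
proof -
  have "(\<Sum>i<2 ^ k. \<Sum>j<2 ^ k. (cmod (U i j - V i j))\<^sup>2)
     \<le> (\<Sum>i<2 ^ k. \<Sum>j<2 ^ k. 2 * (cmod (U i j))\<^sup>2 + 2 * (cmod (V i j))\<^sup>2)"
    by (intro sum_mono cmod_diff_sq_le)
  also have "\<dots> = 2 * (\<Sum>i<2 ^ k. \<Sum>j<2 ^ k. (cmod (U i j))\<^sup>2) + 2 * (\<Sum>i<2 ^ k. \<Sum>j<2 ^ k. (cmod (V i j))\<^sup>2)"
    by (simp add: sum.distrib sum_distrib_left)
  finally show ?thesis unfolding hs_sq_def
    by (simp add: field_simps)
qed

lemma hs_add_le: "hs_sq k (\<lambda>i j. U i j + V i j) \<le> 2 * hs_sq k U + 2 * hs_sq k V"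
  using hs_diff_le[of k U "\<lambda>i j. - V i j"] by (simp add: hs_sq_def)

lemma hs_scale: "hs_sq k (\<lambda>i j. c * U i j) = (cmod c)\<^sup>2 * hs_sq k U"
  unfolding hs_sq_def by (simp add: norm_mult power_mult_distrib sum_distrib_left)

lemma cexp_add: "cexp k (\<lambda>i j. A i j + B i j) = (\<lambda>i j. cexp k A i j + cexp k B i j)"
  by (auto simp: cexp_def fun_eq_iff field_simps)

lemma cexp_scale: "cexp k (\<lambda>i j. c * A i j) = (\<lambda>i j. c * cexp k A i j)"
  by (auto simp: cexp_def fun_eq_iff field_simps)

lemma l2minus_L2: assumes "x \<in> L2" "y \<in> L2" shows "l2minus x y \<in> L2"
proof -
  have "hs_sq k (l2minus x y k) \<le> 2 * l2nsq x + 2 * l2nsq y" for k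
    using hs_diff_le[of k "x k" "y k"] l2nsq_ge[OF assms(1), of k] l2nsq_ge[OF assms(2), of k]
    unfolding l2minus_def by simp
  then show ?thesis using assms unfolding L2_def l2minus_def
    by (auto simp: is_mat_diff cexp_diff bdd_above_def)
qed

lemma l2add_L2: assumes "x \<in> L2" "y \<in> L2" shows "l2add x y \<in> L2"
proof -
  have "hs_sq k (l2add x y k) \<le> 2 * l2nsq x + 2 * l2nsq y" for k
    using hs_add_le[of k "x k" "y k"] l2nsq_ge[OF assms(1), of k] l2nsq_ge[OF assms(2), of k]
    unfolding l2add_def by simp
  then show ?thesis using assms unfolding L2_def l2add_def
    by (auto simp: is_mat_add cexp_add bdd_above_def)
qed

lemma l2scale_L2: assumes "x \<in> L2" shows "l2scale c x \<in> L2"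
proof -
  have "hs_sq k (l2scale c x k) \<le> (cmod c)\<^sup>2 * l2nsq x" for k
    using hs_scale[of k c "x k"] l2nsq_ge[OF assms(1), of k]
    unfolding l2scale_def by (simp add: mult_left_mono)
  then show ?thesis using assms unfolding L2_def l2scale_def
    by (auto simp: is_mat_scale cexp_scale bdd_above_def)
qed

definition pexp :: "nat \<Rightarrow> l2 \<Rightarrow> l2" where
  "pexp n a = (\<lambda>k. if k \<le> n then a k else embed_up n (k - n) (a n))"

lemma pexp_tail: "pexp n a (n+m) = embed_up n m (a n)"
  by (cases m) (auto simp: pexp_def)

lemma hs_embed: "is_mat n A \<Longrightarrow> hs_sq (n+m) (embed_up n m A) = hs_sq n A"
  unfolding hs_ip using ip_embed_embed by simp

lemma pexp_L2: assumes a: "a \<in> L2" shows "pexp n a \<in> L2"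
proof -
  have mat: "is_mat k (pexp n a k)" for k
  proof (cases "k \<le> n")
    case True then show ?thesis using L2_mat[OF a] by (simp add: pexp_def)
  next
    case False
    then have k: "n + (k - n) = k" by simp
    show ?thesis using is_mat_embed[OF L2_mat[OF a], of n "k-n"] False
      by (simp add: pexp_def k)
  qed
  have ce: "cexp k (pexp n a (Suc k)) = pexp n a k" for k
  proof (cases "Suc k \<le> n")
    case True then show ?thesis using L2_cexp[OF a] by (simp add: pexp_def)
  next
    case False
    then have k: "Suc k = n + Suc (k - n)" "n + (k - n) = k" by auto
    have "pexp n a (Suc k) = embed_up n (Suc (k-n)) (a n)"
      using pexp_tail[of n a "Suc (k-n)"] unfolding k(1)[symmetric] .
    then have "pexp n a (Suc k) = diag2 (n + (k - n)) (embed_up n (k-n) (a n))" by simp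
    moreover have "pexp n a k = embed_up n (k-n) (a n)"
      using pexp_tail[of n a "k-n"] unfolding k(2) .
    ultimately show ?thesis
      using cexp_diag2[OF is_mat_embed[OF L2_mat[OF a], of n "k-n"]] k(2) by simp
  qed
  have bd: "hs_sq k (pexp n a k) \<le> l2nsq a" for k
  proof (cases "k \<le> n")
    case True then show ?thesis using l2nsq_ge[OF a] by (simp add: pexp_def)
  next
    case False
    then have k: "n + (k - n) = k" by simp
    have "pexp n a k = embed_up n (k-n) (a n)" using False by (simp add: pexp_def)
    then have "hs_sq k (pexp n a k) = hs_sq n (a n)"
      using hs_embed[OF L2_mat[OF a], of n "k-n"] unfolding k by simp
    then show ?thesis using l2nsq_ge[OF a] by simp
  qed
  show ?thesis unfolding L2_def using mat ce bd by (auto simp: bdd_above_def)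
qed

lemma pexp_Mn: "a \<in> L2 \<Longrightarrow> pexp n a \<in> Mn n"
  unfolding Mn_def using pexp_L2 by (auto simp: pexp_tail) (simp add: pexp_def)

lemma mart_eq_below:
  assumes "x \<in> L2" "y \<in> L2" "x n = y n" "k \<le> n"
  shows "x k = y k"
proof -
  have "x (k + d) = y (k + d) \<Longrightarrow> x k = y k" for d
  proof (induction d)
    case 0 then show ?case by simp
  next
    case (Suc d)
    have "x (k + d) = y (k + d)"
      using L2_cexp[OF assms(1), of "k+d"] L2_cexp[OF assms(2), of "k+d"] Suc.prems by simp
    then show ?case by (rule Suc.IH)
  qed
  from this[of "n - k"] assms show ?thesis by simp
qed

lemma Mn_pyth:
  assumes a: "a \<in> L2" and y: "y \<in> Mn n"
  shows "l2nsq (l2minus a y) = l2nsq (l2minus a (pexp n a)) + hs_sq n (\<lambda>i j. a n i j - y n i j)"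
proof -
  have yL: "y \<in> L2" and ye: "\<And>m. y (n+m) = embed_up n m (y n)" using y by (auto simp: Mn_def)
  have L1: "(\<lambda>m. hs_sq (n+m) (l2minus a y (n+m))) \<longlonglongrightarrow> l2nsq (l2minus a y)"
    by (rule l2nsq_tail[OF l2minus_L2[OF a yL]])
  have eq: "(\<lambda>m. hs_sq (n+m) (l2minus a y (n+m))) =
     (\<lambda>m. hs_sq (n+m) (l2minus a (pexp n a) (n+m)) + hs_sq n (\<lambda>i j. a n i j - y n i j))"
  proof (rule ext)
    fix m
    have "l2minus a y (n+m) = (\<lambda>i j. a (n+m) i j - embed_up n m (y n) i j)"
      unfolding l2minus_def ye ..
    moreover have "l2minus a (pexp n a) (n+m) = (\<lambda>i j. a (n+m) i j - embed_up n m (a n) i j)"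
      unfolding l2minus_def pexp_tail ..
    ultimately show "hs_sq (n+m) (l2minus a y (n+m)) = hs_sq (n+m) (l2minus a (pexp n a) (n+m)) + hs_sq n (\<lambda>i j. a n i j - y n i j)"
      using mart_pyth[OF a L2_mat[OF yL, of n], of m] by simp
  qed
  have L2: "(\<lambda>m. hs_sq (n+m) (l2minus a (pexp n a) (n+m)) + hs_sq n (\<lambda>i j. a n i j - y n i j))
      \<longlonglongrightarrow> l2nsq (l2minus a (pexp n a)) + hs_sq n (\<lambda>i j. a n i j - y n i j)"
    by (intro tendsto_add tendsto_const l2nsq_tail l2minus_L2 a pexp_L2)
  from L1 have "(\<lambda>m. hs_sq (n+m) (l2minus a (pexp n a) (n+m)) + hs_sq n (\<lambda>i j. a n i j - y n i j))
      \<longlonglongrightarrow> l2nsq (l2minus a y)" unfolding eq .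
  from LIMSEQ_unique[OF this L2] show ?thesis .
qed

lemma pexp_dist:
  assumes a: "a \<in> L2"
  shows "l2nsq (l2minus a (pexp n a)) = l2nsq a - hs_sq n (a n)"
proof -
  have "(\<lambda>m. hs_sq (n+m) (l2minus a (pexp n a) (n+m))) \<longlonglongrightarrow> l2nsq (l2minus a (pexp n a))"
    by (rule l2nsq_tail[OF l2minus_L2[OF a pexp_L2[OF a]]])
  moreover have "(\<lambda>m. hs_sq (n+m) (l2minus a (pexp n a) (n+m))) =
     (\<lambda>m. hs_sq (n+m) (a (n+m)) - hs_sq n (a n))"
  proof (rule ext)
    fix m show "hs_sq (n+m) (l2minus a (pexp n a) (n+m)) = hs_sq (n+m) (a (n+m)) - hs_sq n (a n)"
      unfolding l2minus_def pexp_tail using mart_pyth0[OF a, of n m] by simp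
  qed
  moreover have "(\<lambda>m. hs_sq (n+m) (a (n+m)) - hs_sq n (a n)) \<longlonglongrightarrow> l2nsq a - hs_sq n (a n)"
    by (intro tendsto_diff tendsto_const l2nsq_tail a)
  ultimately show ?thesis using LIMSEQ_unique by simp
qed

lemma hs_zero:
  assumes "hs_sq k A = 0" "i < 2^k" "j < 2^k"
  shows "A i j = 0"
proof -
  have "(\<Sum>i<2^k. \<Sum>j<2^k. (cmod (A i j))\<^sup>2) = 0" using assms(1) by (simp add: hs_sq_def)
  then have "\<forall>i\<in>{..<2^k}. (\<Sum>j<2^k. (cmod (A i j))\<^sup>2) = 0"
    by (subst (asm) sum_nonneg_eq_0_iff) (auto intro: sum_nonneg)
  then have "(\<Sum>j<2^k. (cmod (A i j))\<^sup>2) = 0" using assms(2) by simp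
  then have "\<forall>j\<in>{..<2^k}. (cmod (A i j))\<^sup>2 = 0"
    by (subst (asm) sum_nonneg_eq_0_iff) auto
  then show ?thesis using assms(3) by simp
qed

lemma Pn_eq:
  assumes a: "a \<in> L2"
  shows "Pn n a = pexp n a"
  unfolding Pn_def hproj_def
proof (rule the_equality)
  show "pexp n a \<in> Mn n \<and> (\<forall>z\<in>Mn n. l2dist a (pexp n a) \<le> l2dist a z)"
    using pexp_Mn[OF a] Mn_pyth[OF a] hs_nonneg unfolding l2dist_def by auto
next
  fix y assume h: "y \<in> Mn n \<and> (\<forall>z\<in>Mn n. l2dist a y \<le> l2dist a z)"
  then have yM: "y \<in> Mn n" and "l2dist a y \<le> l2dist a (pexp n a)" using pexp_Mn[OF a] by auto
  then have "l2nsq (l2minus a y) \<le> l2nsq (l2minus a (pexp n a))" unfolding l2dist_def by simp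
  then have h0: "hs_sq n (\<lambda>i j. a n i j - y n i j) = 0"
    using Mn_pyth[OF a yM] hs_nonneg[of n "\<lambda>i j. a n i j - y n i j"] by linarith
  have yL: "y \<in> L2" and ye: "\<And>m. y (n+m) = embed_up n m (y n)" using yM by (auto simp: Mn_def)
  have yn: "y n = a n"
  proof (rule ext, rule ext)
    fix i j
    show "y n i j = a n i j"
    proof (cases "i < 2^n \<and> j < 2^n")
      case True then show ?thesis using hs_zero[OF h0, of i j] by simp
    next
      case False then show ?thesis using L2_mat[OF a, of n] L2_mat[OF yL, of n]
        by (auto simp: is_mat_def)
    qed
  qed
  show "y = pexp n a"
  proof (rule ext)
    fix k
    show "y k = pexp n a k"
    proof (cases "k \<le> n")
      case True
      have "pexp n a n = a n" by (simp add: pexp_def)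
      then show ?thesis using mart_eq_below[OF yL pexp_L2[OF a, of n], of n k] True yn by simp
    next
      case False
      then have k: "k = n + (k - n)" by simp
      show ?thesis by (subst (1 2) k) (simp add: ye pexp_tail yn)
    qed
  qed
qed

lemma l2minus_as_add: "l2minus a b = l2add a (l2scale (-1) b)"
  by (simp add: l2minus_def l2add_def l2scale_def fun_eq_iff)

locale qform =
  fixes D :: "l2 set" and E :: "l2 \<Rightarrow> real" and q :: "l2 \<Rightarrow> l2 \<Rightarrow> complex"
  assumes sub: "D \<subseteq> L2"
    and cl_add: "\<And>a b. a \<in> D \<Longrightarrow> b \<in> D \<Longrightarrow> l2add a b \<in> D"
    and cl_scale: "\<And>c a. a \<in> D \<Longrightarrow> l2scale c a \<in> D"
    and q_add: "\<And>a b c. a \<in> D \<Longrightarrow> b \<in> D \<Longrightarrow> c \<in> D \<Longrightarrow> q (l2add a b) c = q a c + q b c"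
    and q_scale: "\<And>s a b. a \<in> D \<Longrightarrow> b \<in> D \<Longrightarrow> q (l2scale s a) b = s * q a b"
    and q_sym: "\<And>a b. a \<in> D \<Longrightarrow> b \<in> D \<Longrightarrow> q b a = cnj (q a b)"
    and E_q: "\<And>a. a \<in> D \<Longrightarrow> E a = Re (q a a)"
    and E_nonneg: "\<And>a. a \<in> D \<Longrightarrow> 0 \<le> E a"
begin

lemma cl_minus: "a \<in> D \<Longrightarrow> b \<in> D \<Longrightarrow> l2minus a b \<in> D"
  unfolding l2minus_as_add by (intro cl_add cl_scale)

lemma q_add2: "a \<in> D \<Longrightarrow> b \<in> D \<Longrightarrow> c \<in> D \<Longrightarrow> q c (l2add a b) = q c a + q c b"
proof -
  assume h: "a \<in> D" "b \<in> D" "c \<in> D"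
  have "cnj (q c (l2add a b)) = cnj (q c a + q c b)"
    using q_sym[of c "l2add a b"] q_add[of a b c] q_sym[of c a] q_sym[of c b] cl_add[of a b] h
    by simp
  then show ?thesis by (metis complex_cnj_cnj)
qed

lemma q_scale2: "a \<in> D \<Longrightarrow> b \<in> D \<Longrightarrow> q a (l2scale s b) = cnj s * q a b"
proof -
  assume h: "a \<in> D" "b \<in> D"
  have "cnj (q a (l2scale s b)) = cnj (cnj s * q a b)"
    using q_sym[of a "l2scale s b"] q_scale[of b a s] q_sym[of a b] cl_scale[of b s] h
    by simp
  then show ?thesis by (metis complex_cnj_cnj)
qed

lemma E_add: "a \<in> D \<Longrightarrow> b \<in> D \<Longrightarrow> E (l2add a b) = E a + E b + 2 * Re (q a b)"
  using E_q[of "l2add a b"] cl_add[of a b] q_add[of a b "l2add a b"] q_add2[of a b a] q_add2[of a b b]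
    q_sym[of a b] E_q[of a] E_q[of b]
  by simp

lemma E_scale: "a \<in> D \<Longrightarrow> E (l2scale c a) = (cmod c)\<^sup>2 * E a"
proof -
  assume a: "a \<in> D"
  have "q (l2scale c a) (l2scale c a) = c * cnj c * q a a"
    using q_scale[OF a cl_scale[OF a], of c c] q_scale2[OF a a, of c] by simp
  moreover have "c * cnj c = complex_of_real ((cmod c)\<^sup>2)" using complex_norm_square[of c] by simp
  ultimately show ?thesis using E_q[OF cl_scale[OF a]] E_q[OF a] by simp
qed

lemma E_minus: "a \<in> D \<Longrightarrow> b \<in> D \<Longrightarrow> E (l2minus a b) = E a + E b - 2 * Re (q a b)"
  unfolding l2minus_as_add
  using E_add[of a "l2scale (-1) b"] cl_scale[of b "-1"] E_scale[of b "-1"] q_scale2[of a b "-1"]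
  by simp

lemma E_minus_sym: "a \<in> D \<Longrightarrow> b \<in> D \<Longrightarrow> E (l2minus a b) = E (l2minus b a)"
  using E_minus[of a b] E_minus[of b a] q_sym[of a b] by simp

lemma CS: assumes a: "a \<in> D" and b: "b \<in> D" shows "(Re (q a b))\<^sup>2 \<le> E a * E b"
proof -
  define r where "r = Re (q a b)"
  have key: "0 \<le> E a + t\<^sup>2 * E b + 2 * t * r" for t :: real
  proof -
    have "l2scale (complex_of_real t) b \<in> D" using cl_scale[OF b] .
    then have "0 \<le> E (l2add a (l2scale (complex_of_real t) b))" using E_nonneg cl_add[OF a] by blast
    also have "\<dots> = E a + t\<^sup>2 * E b + 2 * t * r"
      using E_add[OF a cl_scale[OF b]] E_scale[OF b] q_scale2[OF a b] unfolding r_def by simp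
    finally show ?thesis .
  qed
  show ?thesis
  proof (cases "E b = 0")
    case True
    have "r = 0"
    proof (rule ccontr)
      assume "r \<noteq> 0"
      from key[of "-(E a + 1) / (2 * r)"] True \<open>r \<noteq> 0\<close> show False by (simp add: field_simps)
    qed
    then show ?thesis using True r_def by simp
  next
    case False
    then have Eb: "E b > 0" using E_nonneg[OF b] by simp
    from key[of "- r / E b"] have "0 \<le> E a + r\<^sup>2 / E b - 2 * r\<^sup>2 / E b"
      using Eb by (simp add: field_simps power2_eq_square)
    then have "r\<^sup>2 / E b \<le> E a" by simp
    then show ?thesis using Eb unfolding r_def by (simp add: field_simps mult.commute)
  qed
qed

lemma E_cont:
  assumes a: "a \<in> D" and u: "\<And>m. u m \<in> D" and lim: "(\<lambda>m. E (l2minus (u m) a)) \<longlonglongrightarrow> 0"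
  shows "(\<lambda>m. E (u m)) \<longlonglongrightarrow> E a"
proof -
  define w where "w m = l2minus (u m) a" for m
  have w: "w m \<in> D" for m using cl_minus[OF u a] w_def by simp
  have uw: "u m = l2add a (w m)" for m by (simp add: w_def l2add_def l2minus_def fun_eq_iff)
  have Eu: "E (u m) = E a + E (w m) + 2 * Re (q a (w m))" for m using E_add[OF a w] uw by simp
  have bound: "\<bar>Re (q a (w m))\<bar> \<le> sqrt (E a * E (w m))" for m
    using real_sqrt_le_mono[OF CS[OF a w, of m]] by simp
  have limw: "(\<lambda>m. E (w m)) \<longlonglongrightarrow> 0" using lim by (simp add: w_def)
  have s0: "(\<lambda>m. sqrt (E a * E (w m))) \<longlonglongrightarrow> 0"
    using tendsto_real_sqrt[OF tendsto_mult[OF tendsto_const limw, of "E a"]] by simp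
  have s1: "(\<lambda>m. - sqrt (E a * E (w m))) \<longlonglongrightarrow> 0"
    using tendsto_minus[OF s0] by simp
  have b1: "- sqrt (E a * E (w m)) \<le> Re (q a (w m))" for m using bound[of m] by linarith
  have b2: "Re (q a (w m)) \<le> sqrt (E a * E (w m))" for m using bound[of m] by linarith
  have "(\<lambda>m. Re (q a (w m))) \<longlonglongrightarrow> 0"
    by (rule tendsto_sandwich[OF always_eventually[OF allI[OF b1]] always_eventually[OF allI[OF b2]] s1 s0])
  then have "(\<lambda>m. E a + E (w m) + 2 * Re (q a (w m))) \<longlonglongrightarrow> E a + 0 + 2 * 0"
    by (intro tendsto_add[OF tendsto_add[OF tendsto_const limw]] tendsto_mult[OF tendsto_const])
  then show ?thesis using Eu by simp
qed

end

lemma nqf_qform: "nonneg_quadratic_form D E \<Longrightarrow> \<exists>q. qform D E q"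
proof -
  assume h: "nonneg_quadratic_form D E"
  then obtain q where q: "(\<forall>a\<in>D. \<forall>b\<in>D. \<forall>c\<in>D. q (l2add a b) c = q a c + q b c) \<and>
        (\<forall>s. \<forall>a\<in>D. \<forall>b\<in>D. q (l2scale s a) b = s * q a b) \<and>
        (\<forall>a\<in>D. \<forall>b\<in>D. q b a = cnj (q a b)) \<and>
        (\<forall>a\<in>D. E a = Re (q a a))" unfolding nonneg_quadratic_form_def by blast
  have hh: "D \<subseteq> L2 \<and> (\<lambda>k i j. 0) \<in> D \<and> (\<forall>a\<in>D. \<forall>b\<in>D. l2add a b \<in> D) \<and> (\<forall>c. \<forall>a\<in>D. l2scale c a \<in> D)
    \<and> (\<forall>a\<in>D. 0 \<le> E a)" using h unfolding nonneg_quadratic_form_def by (elim conjE) (intro conjI)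
  have h1: "D \<subseteq> L2" "\<forall>a\<in>D. \<forall>b\<in>D. l2add a b \<in> D" "\<forall>c. \<forall>a\<in>D. l2scale c a \<in> D"
    "\<forall>a\<in>D. 0 \<le> E a" using hh by simp_all
  note q1 = q[THEN conjunct1] and q2 = q[THEN conjunct2, THEN conjunct1]
    and q3 = q[THEN conjunct2, THEN conjunct2, THEN conjunct1]
    and q4 = q[THEN conjunct2, THEN conjunct2, THEN conjunct2]
  have "qform D E q"
  proof
    show "D \<subseteq> L2" using h1(1) .
    show "\<And>a b. a \<in> D \<Longrightarrow> b \<in> D \<Longrightarrow> l2add a b \<in> D" using h1(2) by blast
    show "\<And>c a. a \<in> D \<Longrightarrow> l2scale c a \<in> D" using h1(3) by blast
    show "\<And>a. a \<in> D \<Longrightarrow> 0 \<le> E a" using h1(4) by blast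
    show "\<And>a b c. a \<in> D \<Longrightarrow> b \<in> D \<Longrightarrow> c \<in> D \<Longrightarrow> q (l2add a b) c = q a c + q b c" using q1 by blast
    show "\<And>s a b. a \<in> D \<Longrightarrow> b \<in> D \<Longrightarrow> q (l2scale s a) b = s * q a b" using q2 by blast
    show "\<And>a b. a \<in> D \<Longrightarrow> b \<in> D \<Longrightarrow> q b a = cnj (q a b)" using q3 by blast
    show "\<And>a. a \<in> D \<Longrightarrow> E a = Re (q a a)" using q4 by blast
  qed
  then show ?thesis by blast
qed


lemma l2nsq_minus_sym: "l2nsq (l2minus x y) = l2nsq (l2minus y x)"
  unfolding l2nsq_def l2minus_def hs_sq_def by (simp add: norm_minus_commute)

lemma hs_mid: "hs_sq k (\<lambda>i j. (1/2) * (U i j + V i j)) \<le> (hs_sq k U + hs_sq k V) / 2"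
proof -
  have "hs_sq k (\<lambda>i j. (1/2) * (U i j + V i j)) = hs_sq k (\<lambda>i j. U i j + V i j) / 4"
    using hs_scale[of k "1/2" "\<lambda>i j. U i j + V i j"] by (simp add: power2_eq_square)
  moreover have "hs_sq k (\<lambda>i j. U i j + V i j) \<le> 2 * hs_sq k U + 2 * hs_sq k V" by (rule hs_add_le)
  ultimately show ?thesis by argo
qed

inductive_set mhull :: "(nat \<Rightarrow> l2) \<Rightarrow> nat \<Rightarrow> l2 set" for b N where
  base: "N \<le> k \<Longrightarrow> b k \<in> mhull b N"
| mid: "x \<in> mhull b N \<Longrightarrow> y \<in> mhull b N \<Longrightarrow> l2scale (1/2) (l2add x y) \<in> mhull b N"

lemma mhull_mono: "N \<le> M \<Longrightarrow> mhull b M \<subseteq> mhull b N"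
proof
  fix x assume "N \<le> M" "x \<in> mhull b M"
  then show "x \<in> mhull b N"
    by (induction rule: mhull.induct[OF \<open>x \<in> mhull b M\<close>]) (auto intro: mhull.intros)
qed

lemma mhull_dist:
  assumes a: "a \<in> L2" and b: "\<And>k. b k \<in> L2" and r: "\<And>k. N \<le> k \<Longrightarrow> l2nsq (l2minus (b k) a) \<le> r"
    and x: "x \<in> mhull b N"
  shows "x \<in> L2 \<and> l2nsq (l2minus x a) \<le> r"
  using x
proof (induction rule: mhull.induct)
  case (base k) then show ?case using b r by simp
next
  case (mid x y)
  have eq: "l2minus (l2scale (1/2) (l2add x y)) a k = (\<lambda>i j. (1/2) * (l2minus x a k i j + l2minus y a k i j))" for k
    by (simp add: l2minus_def l2scale_def l2add_def fun_eq_iff field_simps)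
  have "hs_sq k (l2minus (l2scale (1/2) (l2add x y)) a k) \<le> r" for k
  proof -
    have "hs_sq k (l2minus (l2scale (1/2) (l2add x y)) a k)
        \<le> (hs_sq k (l2minus x a k) + hs_sq k (l2minus y a k)) / 2"
      unfolding eq by (rule hs_mid)
    also have "\<dots> \<le> (l2nsq (l2minus x a) + l2nsq (l2minus y a)) / 2"
      using l2nsq_ge[OF l2minus_L2[OF _ a], of x k] l2nsq_ge[OF l2minus_L2[OF _ a], of y k] mid.IH
      by simp
    also have "\<dots> \<le> r" using mid.IH by simp
    finally show ?thesis .
  qed
  then show ?case using l2nsq_le mid.IH l2scale_L2 l2add_L2 by blast
qed

lemma cauchy_aux:
  fixes f g :: "nat \<Rightarrow> real"
  assumes f: "f \<longlonglongrightarrow> L" and g: "g \<longlonglongrightarrow> L" and h: "\<And>m l. h m l \<le> 2 * f m + 2 * f l - 4 * g (min m l)"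
  shows "\<forall>e>0. \<exists>N. \<forall>m\<ge>N. \<forall>l\<ge>N. h m l < e"
proof (intro allI impI)
  fix e :: real assume e: "e > 0"
  obtain N1 where N1: "\<And>n. n \<ge> N1 \<Longrightarrow> \<bar>f n - L\<bar> < e/16"
    using f e unfolding LIMSEQ_iff by (metis real_norm_def zero_less_divide_iff zero_less_numeral)
  obtain N2 where N2: "\<And>n. n \<ge> N2 \<Longrightarrow> \<bar>g n - L\<bar> < e/16"
    using g e unfolding LIMSEQ_iff by (metis real_norm_def zero_less_divide_iff zero_less_numeral)
  show "\<exists>N. \<forall>m\<ge>N. \<forall>l\<ge>N. h m l < e"
  proof (intro exI[of _ "max N1 N2"] allI impI)
    fix m l assume "max N1 N2 \<le> m" "max N1 N2 \<le> l"
    then have "\<bar>f m - L\<bar> < e/16" "\<bar>f l - L\<bar> < e/16" "\<bar>g (min m l) - L\<bar> < e/16"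
      using N1 N2 by auto
    then show "h m l < e" using h[of m l] e by linarith
  qed
qed

context qform
begin

lemma mhull_D: assumes b: "\<And>k. b k \<in> D" and x: "x \<in> mhull b N" shows "x \<in> D"
  using x by (induction rule: mhull.induct) (auto intro: cl_add cl_scale b)

lemma E_par: "x \<in> D \<Longrightarrow> y \<in> D \<Longrightarrow> E (l2minus x y) = 2 * E x + 2 * E y - 4 * E (l2scale (1/2) (l2add x y))"
  using E_add[of x y] E_minus[of x y] E_scale[OF cl_add[of x y], of "1/2"] by (simp add: power2_eq_square)

end

lemma main_1_2:
  assumes qf: "qform D E q" and cl: "closed_form D E" and MD: "\<And>n. Mn n \<subseteq> D"
    and a: "a \<in> D" and lim: "(\<lambda>n. E (Pn n a)) \<longlonglongrightarrow> E a"
  shows "(\<lambda>n. E (Qn n a)) \<longlonglongrightarrow> 0"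
proof -
  interpret qform D E q by (rule qf)
  have aL: "a \<in> L2" using a sub by blast
  define b where "b n = pexp n a" for n
  have bD: "b n \<in> D" for n unfolding b_def using MD pexp_Mn[OF aL, of n] by blast
  have bL: "b n \<in> L2" for n using bD sub by blast
  have Pb: "Pn n a = b n" for n unfolding b_def by (rule Pn_eq[OF aL])
  have limb: "(\<lambda>n. E (b n)) \<longlonglongrightarrow> E a" using lim Pb by simp
  define rr where "rr n = l2nsq a - hs_sq n (a n)" for n
  have brr: "l2nsq (l2minus (b n) a) = rr n" for n
    unfolding b_def rr_def using pexp_dist[OF aL, of n] l2nsq_minus_sym[of a "pexp n a"] by simp
  have rr_anti: "rr m \<le> rr n" if "n \<le> m" for n m
    using hs_mono[OF aL, of n "m - n"] that unfolding rr_def by simp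
  have rr0: "rr \<longlonglongrightarrow> 0"
    using tendsto_diff[OF tendsto_const l2nsq_lim[OF aL], of "l2nsq a"] unfolding rr_def by simp
  have sq0: "(\<lambda>n. sqrt (rr n)) \<longlonglongrightarrow> 0"
    using tendsto_real_sqrt[OF rr0] by simp
  have Lclosed: "\<And>u. (\<forall>m. u m \<in> D) \<Longrightarrow> (\<lambda>m. l2dist (u m) a) \<longlonglongrightarrow> 0 \<Longrightarrow>
        (\<forall>e>0. \<exists>N. \<forall>m\<ge>N. \<forall>l\<ge>N. E (l2minus (u m) (u l)) < e) \<Longrightarrow>
        (\<lambda>m. E (l2minus (u m) a)) \<longlonglongrightarrow> 0"
    using cl aL unfolding closed_form_def by blast
  define C where "C N = mhull b N" for N
  have CD: "C N \<subseteq> D" for N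
  proof
    fix x assume "x \<in> C N"
    then show "x \<in> D" using mhull_D[of b x N] bD unfolding C_def by blast
  qed
  have bC: "b k \<in> C N" if "N \<le> k" for k N unfolding C_def using that by (rule mhull.base)
  have Cmono: "C M \<subseteq> C N" if "N \<le> M" for N M unfolding C_def using that by (rule mhull_mono)
  have Cdist: "x \<in> C N \<Longrightarrow> l2nsq (l2minus x a) \<le> rr N" for x N
    using mhull_dist[where b=b and N=N and r="rr N" and x=x, OF aL bL] brr rr_anti C_def by simp
  have midC: "l2scale (1/2) (l2add x y) \<in> C N" if "x \<in> C N" "y \<in> C N" for x y N
    using that unfolding C_def by (rule mhull.mid)
  define d where "d N = Inf (E ` C N)" for N
  have bddC: "bdd_below (E ` C N)" for N
    using CD E_nonneg by (auto simp: bdd_below_def)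
  have neC: "E ` C N \<noteq> {}" for N using bC[of N N] by blast
  have d_le: "d N \<le> E x" if "x \<in> C N" for x N
    unfolding d_def using that bddC by (auto intro: cInf_lower)
  have d_mono: "incseq d"
  proof (unfold incseq_def, intro allI impI)
    fix N M :: nat assume "N \<le> M"
    then show "d N \<le> d M" unfolding d_def
      using Cmono[of N M] neC bddC by (intro cInf_superset_mono) auto
  qed
  obtain K where K: "\<And>n. norm (E (b n)) \<le> K"
    using BseqD[OF convergent_imp_Bseq[OF convergentI[OF limb]]] by blast
  have dK: "d i \<le> K" for i using d_le[OF bC[of i i]] K[of i] by simp
  obtain \<delta> where dlim: "d \<longlonglongrightarrow> \<delta>"
    using incseq_convergent[OF d_mono] dK by blast
  have "\<exists>x\<in>C N. E x < d N + 1 / (Suc N)" for N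
  proof -
    have "Inf (E ` C N) < d N + 1 / Suc N" unfolding d_def by simp
    from cInf_lessD[OF neC this] show ?thesis by blast
  qed
  then obtain x where xC: "\<And>N. x N \<in> C N" and xE: "\<And>N. E (x N) < d N + 1 / Suc N"
    by metis
  have xD: "x N \<in> D" for N using xC CD by blast
  have inv0: "(\<lambda>N. 1 / real (Suc N)) \<longlonglongrightarrow> 0"
    using LIMSEQ_Suc[OF lim_inverse_n'] by simp
  have fx: "(\<lambda>N. d N + 1 / real (Suc N)) \<longlonglongrightarrow> \<delta>"
    using tendsto_add[OF dlim inv0] by simp
  have xC_min: "x m \<in> C (min m l)" "x l \<in> C (min m l)" for m l
    using xC Cmono by (metis min.cobounded1 min.cobounded2 subsetD)+
  have bC_min: "b m \<in> C (min m l)" "b l \<in> C (min m l)" for m l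
    using bC by auto
  have xcauchy: "\<forall>e>0. \<exists>N. \<forall>m\<ge>N. \<forall>l\<ge>N. E (l2minus (x m) (x l)) < e"
  proof (rule cauchy_aux[OF fx dlim])
    fix m l
    have "d (min m l) \<le> E (l2scale (1/2) (l2add (x m) (x l)))"
      by (rule d_le[OF midC[OF xC_min]])
    then show "E (l2minus (x m) (x l)) \<le> 2 * (d m + 1 / real (Suc m)) + 2 * (d l + 1 / real (Suc l)) - 4 * d (min m l)"
      using E_par[OF xD xD, of m l] xE[of m] xE[of l] by argo
  qed
  have xdist: "(\<lambda>N. l2dist (x N) a) \<longlonglongrightarrow> 0"
  proof (rule tendsto_sandwich[OF _ _ tendsto_const sq0])
    have xL: "x N \<in> L2" for N using xD sub by blast
    show "\<forall>\<^sub>F N in sequentially. 0 \<le> l2dist (x N) a"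
      using l2nsq_nonneg[OF l2minus_L2[OF xL aL]] by (simp add: l2dist_def always_eventually)
    show "\<forall>\<^sub>F N in sequentially. l2dist (x N) a \<le> sqrt (rr N)"
      using Cdist[OF xC] by (simp add: l2dist_def always_eventually)
  qed
  have "(\<lambda>N. E (l2minus (x N) a)) \<longlonglongrightarrow> 0"
    using Lclosed[of x] xD xdist xcauchy by blast
  then have Ex: "(\<lambda>N. E (x N)) \<longlonglongrightarrow> E a" using E_cont[where u=x, OF a xD] by blast
  have dEa: "d \<longlonglongrightarrow> E a"
  proof (rule tendsto_sandwich[OF _ _ _ limb])
    show "\<forall>\<^sub>F N in sequentially. E (x N) - 1 / real (Suc N) \<le> d N"
      using xE by (simp add: less_imp_le algebra_simps)
    show "\<forall>\<^sub>F N in sequentially. d N \<le> E (b N)"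
      using d_le[OF bC[OF order_refl]] by (simp add: always_eventually)
    show "(\<lambda>N. E (x N) - 1 / real (Suc N)) \<longlonglongrightarrow> E a"
      using tendsto_diff[OF Ex inv0] by simp
  qed
  have bcauchy: "\<forall>e>0. \<exists>N. \<forall>m\<ge>N. \<forall>l\<ge>N. E (l2minus (b m) (b l)) < e"
  proof (rule cauchy_aux[OF limb dEa])
    fix m l
    have "d (min m l) \<le> E (l2scale (1/2) (l2add (b m) (b l)))"
      by (rule d_le[OF midC[OF bC_min]])
    then show "E (l2minus (b m) (b l)) \<le> 2 * E (b m) + 2 * E (b l) - 4 * d (min m l)"
      using E_par[OF bD bD, of m l] by argo
  qed
  have bdist: "(\<lambda>N. l2dist (b N) a) \<longlonglongrightarrow> 0"
    unfolding l2dist_def brr by (rule sq0)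
  have "(\<lambda>N. E (l2minus (b N) a)) \<longlonglongrightarrow> 0"
    using Lclosed[of b] bD bdist bcauchy by blast
  moreover have "E (Qn n a) = E (l2minus (b n) a)" for n
    unfolding Qn_def Pb using E_minus_sym[OF a bD] by simp
  ultimately show ?thesis by simp
qed

lemma main_2_1:
  assumes qf: "qform D E q" and MD: "\<And>n. Mn n \<subseteq> D"
    and a: "a \<in> D" and lim: "(\<lambda>n. E (Qn n a)) \<longlonglongrightarrow> 0"
  shows "(\<lambda>n. E (Pn n a)) \<longlonglongrightarrow> E a"
proof -
  interpret qform D E q by (rule qf)
  have aL: "a \<in> L2" using a sub by blast
  have PD: "Pn n a \<in> D" for n unfolding Pn_eq[OF aL] using MD pexp_Mn[OF aL, of n] by blast
  have "E (Qn n a) = E (l2minus (Pn n a) a)" for n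
    unfolding Qn_def using E_minus_sym[OF a PD] by simp
  then have "(\<lambda>n. E (l2minus (Pn n a) a)) \<longlonglongrightarrow> 0" using lim by simp
  then show ?thesis using E_cont[where u="\<lambda>n. Pn n a", OF a PD] by blast
qed

theorem proposition2p3:
  assumes "dirichlet_form D E"
    and "(\<Union>n. Mn n) \<subseteq> D"
  shows "(\<forall>a\<in>D. (\<lambda>n. E (Pn n a)) \<longlonglongrightarrow> E a) \<longleftrightarrow>
         (\<forall>a\<in>D. (\<lambda>n. E (Qn n a)) \<longlonglongrightarrow> 0)"
proof -
  have nq: "nonneg_quadratic_form D E" and cl: "closed_form D E"
    using assms(1) unfolding dirichlet_form_def by blast+
  obtain q where qf: "qform D E q" using nqf_qform[OF nq] by blast
  have MD: "\<And>n. Mn n \<subseteq> D" using assms(2) by blast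
  show ?thesis using main_1_2[OF qf cl MD] main_2_1[OF qf MD] by blast
qed

end
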